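(* Let $\mathfrak{R}$ be either $\mathbb{F}_q$ ($q$ a prime power) or $\mathbb{Z}_k$ ($k\ge 2$), with character $\chi$ as in the context. Let $C$ and $D$ be two $\mathfrak{R}$-linear codes of length $n$ and $\bm{w}\in\mathfrak{R}^n$. Then (i) $\displaystyle \mathfrak{Jac}(C^{\perp},D,\bm{w}; x_{a} : a \in \mathfrak{R}^{3})=\frac{1}{|C|}\,\mathfrak{Jac}\Big(C,D,\bm{w};\ \sum_{b\in\mathfrak{R}}\chi(a_1 b)\,x_{(b,a_2,a_3)} : a\in\mathfrak{R}^3\Big)$; (ii) $\displaystyle \mathfrak{Jac}(C^{\perp},D^{\perp},\bm{w}; x_{a} : a \in \mathfrak{R}^{3})=\frac{1}{|C||D|}\,\mathfrak{Jac}\Big(C,D,\bm{w};\ \sum_{b_1,b_2\in\mathfrak{R}}\chi(a_1 b_1+a_2b_2)\,x_{(b_1,b_2,a_3)} : a\in\mathfrak{R}^3\Big)$, where on the right-hand sides each variable $x_{(a_1,a_2,a_3)}$ of $\mathfrak{Jac}(C,D,\bm{w};x_a:a\in\mathfrak{R}^3)$ is replaced by the indicated linear form.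
   Context: An $\mathbb{F}_q$-linear code of length $n$ is a subspace of $\mathbb{F}_q^n$; a $\mathbb{Z}_k$-linear code of length $n$ is an additive subgroup of $\mathbb{Z}_k^n$. For $\bm{u},\bm{v}\in\mathfrak{R}^n$, $\bm{u}\cdot\bm{v}=\sum_i u_iv_i$, and $C^\perp=\{\bm{v}\in\mathfrak{R}^n : \bm{u}\cdot\bm{v}=0 \ \forall \bm{u}\in C\}$. The character $\chi$: if $\mathfrak{R}=\mathbb{F}_q$, $q=p^f$, fix a root $\lambda$ of a primitive irreducible polynomial of degree $f$ over $\mathbb{F}_p$, write $\alpha=\alpha_0+\alpha_1\lambda+\cdots+\alpha_{f-1}\lambda^{f-1}$ ($\alpha_i\in\mathbb{F}_p$) and set $\chi(\alpha)=\zeta_p^{\alpha_0}$, $\zeta_p$ a primitive $p$-th root of unity; if $\mathfrak{R}=\mathbb{Z}_k$, $\chi(\alpha)=\zeta_k^{\alpha}$, $\zeta_k$ a primitive $k$-th root of unity. For $a\in\mathfrak{R}^3$, $h_a(\bm{u},\bm{v};\bm{w})=\#\{i:(u_i,v_i,w_i)=a\}$, and the complete joint Jacobi polynomial is $\mathfrak{Jac}(C,D,\bm{w};x_a : a\in\mathfrak{R}^3)=\sum_{\bm{u}\in C,\bm{v}\in D}\prod_{a\in\mathfrak{R}^3}x_a^{h_a(\bm{u},\bm{v};\bm{w})}$. *)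

theory Defs
  imports Complex_Main "HOL-Analysis.Finite_Cartesian_Product" "HOL-Computational_Algebra.Primes"
begin

definition prim_root_unity :: "nat \<Rightarrow> complex \<Rightarrow> bool" where
  "prim_root_unity m z \<longleftrightarrow> z ^ m = 1 \<and> (\<forall>j. 0 < j \<and> j < m \<longrightarrow> z ^ j \<noteq> 1)"

text \<open>Setting 1: the ring 'a is a finite field F_q, q = p^f, p = CHAR('a), and chi is the
  paper's character: lam is a root of a primitive irreducible polynomial of degree f over F_p
  (i.e. lam generates the multiplicative group, order q-1), and
  chi(a_0 + a_1 lam + ... + a_(f-1) lam^(f-1)) = zeta_p ^ a_0 with zeta_p a primitive p-th root of unity.\<close>
definition Fq_setting :: "('a::{comm_ring_1,finite} \<Rightarrow> complex) \<Rightarrow> bool" where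
  "Fq_setting chr \<longleftrightarrow>
     (\<forall>x::'a. x \<noteq> 0 \<longrightarrow> (\<exists>y. x * y = 1)) \<and> prime (CHAR('a)) \<and>
     (\<exists>lam f \<zeta>.
        f \<ge> 1 \<and> CARD('a) = CHAR('a) ^ f \<and>
        lam ^ (CARD('a) - 1) = 1 \<and> (\<forall>j. 0 < j \<and> j < CARD('a) - 1 \<longrightarrow> lam ^ j \<noteq> 1) \<and>
        prim_root_unity (CHAR('a)) \<zeta> \<and>
        (\<forall>(c :: nat \<Rightarrow> nat).  (\<forall>i<f. c i < CHAR('a)) \<longrightarrow>
            chr (\<Sum>i<f. of_nat (c i) * lam ^ i) = \<zeta> ^ (c 0)))"

text \<open>Setting 2: the ring 'a is Z_k (k = CHAR('a) \<ge> 2; every element is the image of a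
  natural number), and chi(m) = zeta_k ^ m with zeta_k a primitive k-th root of unity.\<close>
definition Zk_setting :: "('a::{comm_ring_1,finite} \<Rightarrow> complex) \<Rightarrow> bool" where
  "Zk_setting chr \<longleftrightarrow>
     CHAR('a) \<ge> 2 \<and> (\<forall>x::'a. \<exists>m::nat. x = of_nat m) \<and>
     (\<exists>\<zeta>::complex. prim_root_unity (CHAR('a)) \<zeta> \<and> (\<forall>m::nat. chr (of_nat m) = \<zeta> ^ m))"

definition subspace_code :: "('a::comm_ring_1 ^ 'n) set \<Rightarrow> bool" where
  "subspace_code C \<longleftrightarrow> 0 \<in> C \<and> (\<forall>u\<in>C. \<forall>v\<in>C. u + v \<in> C) \<and> (\<forall>c. \<forall>u\<in>C. c *s u \<in> C)"

definition additive_code :: "('a::comm_ring_1 ^ 'n) set \<Rightarrow> bool" where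
  "additive_code C \<longleftrightarrow> 0 \<in> C \<and> (\<forall>u\<in>C. \<forall>v\<in>C. u + v \<in> C) \<and> (\<forall>u\<in>C. - u \<in> C)"

definition dotp :: "'a::comm_ring_1 ^ 'n \<Rightarrow> 'a ^ 'n \<Rightarrow> 'a" where
  "dotp u v = (\<Sum>i\<in>UNIV. u $ i * v $ i)"

definition dual_code :: "('a::comm_ring_1 ^ 'n) set \<Rightarrow> ('a ^ 'n) set" where
  "dual_code C = {v. \<forall>u\<in>C. dotp u v = 0}"

definition hcount :: "'a \<times> 'a \<times> 'a \<Rightarrow> 'a ^ 'n \<Rightarrow> 'a ^ 'n \<Rightarrow> 'a ^ 'n \<Rightarrow> nat" where
  "hcount a u v w = card {i. (u $ i, v $ i, w $ i) = a}"

text \<open>Complete joint Jacobi polynomial, evaluated at an assignment x of complex values to the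
  variables x_a, a \<in> R^3.\<close>
definition jac :: "('a::finite ^ 'n) set \<Rightarrow> ('a ^ 'n) set \<Rightarrow> 'a ^ 'n
                   \<Rightarrow> ('a \<times> 'a \<times> 'a \<Rightarrow> complex) \<Rightarrow> complex" where
  "jac C D w x = (\<Sum>u\<in>C. \<Sum>v\<in>D. \<Prod>a\<in>UNIV. x a ^ hcount a u v w)"

end

theory Submission
  imports Defs "HOL-Library.FuncSet"
begin


lemma char_inv_nat:
  assumes pr: "prime (CHAR('a::comm_ring_1))" and k: "0 < k" "k < CHAR('a)"
  shows "\<exists>m. (of_nat m :: 'a) * of_nat k = 1"
proof -
  have "coprime k (CHAR('a))"
    using pr k by (metis nat_dvd_not_less prime_imp_coprime_nat coprime_commute)
  hence g: "gcd k (CHAR('a)) = 1" by simp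
  obtain x y where "k * x = CHAR('a) * y + gcd k (CHAR('a))"
    using bezout_nat[of k "CHAR('a)"] k by auto
  hence "(of_nat (k * x) :: 'a) = of_nat (CHAR('a) * y + 1)" using g by simp
  hence "(of_nat x :: 'a) * of_nat k = 1" by (simp add: mult.commute)
  thus ?thesis by blast
qed



lemma fq_span:
  fixes lam :: "'a::{comm_ring_1,finite}"
  assumes pr: "prime (CHAR('a))" and cardq: "CARD('a) = CHAR('a)^f"
    and lq: "lam^(CARD('a)-1) = 1" and ord: "\<forall>j. 0<j \<and> j < CARD('a)-1 \<longrightarrow> lam^j \<noteq> 1"
  shows "\<exists>c. x = (\<Sum>i<f. of_nat (c i) * lam^i)"
proof -
  define p where "p = CHAR('a)"
  define V where "V d = range (\<lambda>c. \<Sum>i<d. (of_nat (c i)::'a) * lam^i)" for d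
  have inV: "x \<in> V d" if "x = (\<Sum>i<d. (of_nat (c i)::'a) * lam^i)" for x d c
    unfolding V_def using that by blast
  have p1: "p > 1" using pr prime_gt_1_nat p_def by blast
  have one_nz: "(1::'a) \<noteq> 0"
  proof
    assume "(1::'a) = 0"
    hence "(of_nat 1::'a) = 0" by simp
    hence "p dvd 1" unfolding p_def by (simp only: of_nat_eq_0_iff_char_dvd)
    thus False using p1 by simp
  qed
  have add: "u + v \<in> V d" if H: "u \<in> V d" "v \<in> V d" for u v d
  proof -
    obtain c where "u = (\<Sum>i<d. (of_nat (c i)::'a) * lam^i)"
      using H(1) by (auto simp: V_def)
    moreover obtain c' where "v = (\<Sum>i<d. (of_nat (c' i)::'a) * lam^i)"
      using H(2) by (auto simp: V_def)
    ultimately have "u + v = (\<Sum>i<d. (of_nat (c i + c' i)::'a) * lam^i)"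
      by (simp add: sum.distrib distrib_right)
    thus ?thesis by (rule inV)
  qed
  have smul: "of_nat m * v \<in> V d" if H: "v \<in> V d" for m v d
  proof -
    obtain c where "v = (\<Sum>i<d. (of_nat (c i)::'a) * lam^i)"
      using H by (auto simp: V_def)
    hence "of_nat m * v = (\<Sum>i<d. (of_nat (m * c i)::'a) * lam^i)"
      by (simp add: sum_distrib_left mult.assoc)
    thus ?thesis by (rule inV)
  qed
  have pm1: "(of_nat (p - 1) :: 'a) = - 1"
  proof -
    have "(of_nat ((p - 1) + 1) :: 'a) = 0" using p1 p_def by simp
    hence "(of_nat (p - 1) :: 'a) + 1 = 0" by (simp add: add.commute)
    thus ?thesis by (simp add: eq_neg_iff_add_eq_0)
  qed
  have neg: "- v \<in> V d" if H: "v \<in> V d" for v d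
    using smul[OF that, of "p - 1"] pm1 by simp
  have zero: "0 \<in> V d" for d
  proof -
    have "(0::'a) = (\<Sum>i<d. (of_nat ((\<lambda>_. 0::nat) i)::'a) * lam^i)" by simp
    thus ?thesis by (rule inV)
  qed
  have one: "1 \<in> V (Suc d)" for d
  proof -
    have "(1::'a) = (\<Sum>i<Suc d. (of_nat ((\<lambda>i. if i = 0 then 1 else 0::nat) i)::'a) * lam^i)"
      by (simp only: sum.lessThan_Suc_shift) simp
    thus ?thesis by (rule inV)
  qed
  have lmul: "lam * v \<in> V (Suc d)" if H: "v \<in> V d" for v d
  proof -
    obtain c where c: "v = (\<Sum>i<d. (of_nat (c i)::'a) * lam^i)"
      using H by (auto simp: V_def)
    have "lam * v = (\<Sum>i<Suc d. (of_nat ((\<lambda>i. if i = 0 then 0 else c (i - 1)) i)::'a) * lam^i)"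
      unfolding c by (simp only: sum.lessThan_Suc_shift) (simp add: sum_distrib_left mult_ac)
    thus ?thesis by (rule inV)
  qed
  have sucV: "V (Suc d) = {v + of_nat j * lam^d | v j. v \<in> V d}" for d
  proof safe
    fix x assume "x \<in> V (Suc d)"
    then obtain c where "x = (\<Sum>i<Suc d. (of_nat (c i)::'a) * lam^i)" unfolding V_def by auto
    hence "x = (\<Sum>i<d. (of_nat (c i)::'a) * lam^i) + of_nat (c d) * lam^d" by simp
    moreover have "(\<Sum>i<d. (of_nat (c i)::'a) * lam^i) \<in> V d" by (rule inV[OF refl])
    ultimately show "\<exists>v j. x = v + of_nat j * lam ^ d \<and> v \<in> V d" by blast
  next
    fix v j assume "v \<in> V d"
    then obtain c where c: "v = (\<Sum>i<d. (of_nat (c i)::'a) * lam^i)" unfolding V_def by auto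
    have "v + of_nat j * lam^d = (\<Sum>i<Suc d. (of_nat ((c(d := j)) i)::'a) * lam^i)"
      unfolding c by (simp add: sum.lessThan_Suc)
    thus "v + of_nat j * lam^d \<in> V (Suc d)" by (rule inV)
  qed
  have mono: "V d \<subseteq> V (Suc d)" for d
  proof
    fix v assume "v \<in> V d"
    hence "v + of_nat 0 * lam^d \<in> V (Suc d)" unfolding sucV by blast
    thus "v \<in> V (Suc d)" by simp
  qed
  define q where "q = CARD('a)"
  have q2: "q \<ge> 2"
  proof -
    have "card {0::'a, 1} = 2" using one_nz by simp
    moreover have "card {0::'a, 1} \<le> q" unfolding q_def by (rule card_mono) auto
    ultimately show ?thesis by simp
  qed
  have lampow_nz: "lam ^ j \<noteq> 0" for j
  proof
    assume z: "lam ^ j = 0"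
    have "lam ^ ((q - 1) * j) = 1" using lq unfolding q_def by (simp add: power_mult)
    moreover have "(q - 1) * j = j + (q - 2) * j" using q2
      by (metis add.commute diff_diff_left mult.commute mult_Suc_right nat_1_add_1 Suc_diff_Suc less_le_trans one_less_numeral_iff semiring_norm(76) le_eq_less_or_eq Suc_1)
    ultimately have "lam ^ j * lam ^ ((q - 2) * j) = 1" by (simp add: power_add)
    thus False using z one_nz by simp
  qed
  have lam_inj: "lam ^ i \<noteq> lam ^ j" if H: "i < j" "j < q - 1" for i j
  proof
    assume e: "lam ^ i = lam ^ j"
    have "lam ^ (q - 1 - i) * lam ^ i = 1" using lq that unfolding q_def
      by (metis add.commute le_add_diff_inverse less_imp_le_nat order.strict_trans power_add)
    moreover have "lam ^ j = lam ^ i * lam ^ (j - i)" using that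
      by (metis le_add_diff_inverse less_imp_le_nat power_add)
    ultimately have "lam ^ (j - i) = 1" using e
      by (metis mult.assoc mult_1)
    thus False using ord that unfolding q_def by force
  qed
  have allpow: "UNIV - {0} = (\<lambda>j. lam ^ j) ` {..<q - 1}"
  proof -
    have inj: "inj_on (\<lambda>j. lam ^ j) {..<q - 1}"
      unfolding inj_on_def using lam_inj by (metis lessThan_iff linorder_neqE_nat)
    have sub: "(\<lambda>j. lam ^ j) ` {..<q - 1} \<subseteq> UNIV - {0}" using lampow_nz by auto
    have "card ((\<lambda>j. lam ^ j) ` {..<q - 1}) = q - 1" using card_image[OF inj] by simp
    moreover have "card (UNIV - {0::'a}) = q - 1" unfolding q_def by (simp add: card_Diff_singleton)
    ultimately have "(\<lambda>j. lam ^ j) ` {..<q - 1} = UNIV - {0}"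
      using sub by (intro card_subset_eq) auto
    thus ?thesis by simp
  qed
  have closure: "V d = UNIV" if eq: "V (Suc d) = V d" for d
  proof -
    have pw: "lam ^ j \<in> V d" for j
    proof (induction j)
      case 0 then show ?case using one[of d] eq by simp
    next
      case (Suc j) then show ?case using lmul[OF Suc] eq by simp
    qed
    show ?thesis
    proof (rule set_eqI, rule iffI)
      fix x :: 'a assume "x \<in> UNIV"
      show "x \<in> V d"
      proof (cases "x = 0")
        case True then show ?thesis using zero by simp
      next
        case False
        hence "x \<in> (\<lambda>j. lam ^ j) ` {..<q - 1}" using allpow by blast
        thus ?thesis using pw by blast
      qed
    qed simp
  qed
  have cancel: "L \<in> V d" if H: "0 < k" "k < p" "of_nat k * L \<in> V d" for k L d
  proof -
    obtain m where "(of_nat m :: 'a) * of_nat k = 1" using char_inv_nat[of k] pr H p_def by blast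
    hence "L = of_nat m * (of_nat k * L)" by (simp add: mult.assoc[symmetric])
    thus ?thesis using smul[OF H(3), of m] by simp
  qed
  have key: "V d = UNIV \<or> p ^ d \<le> card (V d)" for d
  proof (induction d)
    case 0
    have "card (V 0) > 0" using zero[of 0] by (auto simp: card_gt_0_iff)
    then show ?case by simp
  next
    case (Suc d)
    show ?case
    proof (cases "V d = UNIV")
      case True then show ?thesis using mono[of d] by auto
    next
      case False
      hence ih: "p ^ d \<le> card (V d)" using Suc by blast
      have nL: "lam ^ d \<notin> V d"
      proof
        assume L: "lam ^ d \<in> V d"
        have "V (Suc d) \<subseteq> V d" unfolding sucV using L add smul by blast
        hence "V (Suc d) = V d" using mono[of d] by blast
        thus False using closure False by blast
      qed
      have h2: False if "j < j'" "j' < p" "v \<in> V d" "v' \<in> V d"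
          "v + of_nat j * lam ^ d = v' + of_nat j' * lam ^ d" for j j' v v'
      proof -
        have "(of_nat j' :: 'a) = of_nat j + of_nat (j' - j)" using that(1)
          by (metis le_add_diff_inverse less_imp_le_nat of_nat_add)
        hence "v = v' + of_nat (j' - j) * lam ^ d" using that(5) by (simp add: algebra_simps)
        hence "of_nat (j' - j) * lam ^ d = v + - v'" by simp
        moreover have "v + - v' \<in> V d" using add neg that by blast
        ultimately have "of_nat (j' - j) * lam ^ d \<in> V d" by simp
        hence "lam ^ d \<in> V d" using cancel[of "j' - j"] that by simp
        thus False using nL by simp
      qed
      have inj: "inj_on (\<lambda>(v, j). v + of_nat j * lam ^ d) (V d \<times> {..<p})"
      proof (rule inj_onI, clarify)
        fix v j v' j'
        assume a: "v \<in> V d" "j < p" "v' \<in> V d" "j' < p"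
          "v + of_nat j * lam ^ d = v' + of_nat j' * lam ^ d"
        show "v = v' \<and> j = j'"
        proof (cases j j' rule: linorder_cases)
          case less then show ?thesis using h2 a by blast
        next
          case equal then show ?thesis using a by simp
        next
          case greater then show ?thesis using h2[of j' j v' v] a by metis
        qed
      qed
      have img: "(\<lambda>(v, j). v + of_nat j * lam ^ d) ` (V d \<times> {..<p}) \<subseteq> V (Suc d)"
        unfolding sucV by auto
      have "card (V d \<times> {..<p}) \<le> card (V (Suc d))"
        using card_inj_on_le[OF inj img] by simp
      hence "card (V d) * p \<le> card (V (Suc d))" by (simp add: card_cartesian_product)
      moreover have "p ^ Suc d \<le> card (V d) * p" using ih by simp
      ultimately show ?thesis by linarith
    qed
  qed
  have "V f = UNIV"
  proof -
    have "card (V f) \<le> CARD('a)" by (simp add: card_mono)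
    with key[of f] cardq have "V f = UNIV \<or> card (V f) = CARD('a)" unfolding p_def by linarith
    thus ?thesis using card_subset_eq[of UNIV "V f"] by auto
  qed
  hence "x \<in> V f" by simp
  thus ?thesis unfolding V_def by (simp add: image_iff)
qed



lemma pow_mod_eq:
  fixes z :: complex
  assumes "z ^ p = 1" shows "z ^ n = z ^ (n mod p)"
proof -
  have "z ^ n = z ^ (p * (n div p) + n mod p)" by simp
  also have "\<dots> = (z ^ p) ^ (n div p) * z ^ (n mod p)" by (simp only: power_add power_mult)
  finally show ?thesis using assms by simp
qed

lemma of_nat_mod_char: "(of_nat (n mod CHAR('a)) :: 'a::comm_ring_1) = of_nat n"
proof -
  have "(of_nat n :: 'a) = of_nat (CHAR('a) * (n div CHAR('a)) + n mod CHAR('a))" by simp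
  also have "\<dots> = of_nat (n mod CHAR('a))" by (simp only: of_nat_add of_nat_mult of_nat_CHAR) simp
  finally show ?thesis by simp
qed

lemma Fq_props:
  fixes chr :: "'a::{comm_ring_1,finite} \<Rightarrow> complex"
  assumes "Fq_setting chr"
  shows "(\<forall>x y. chr (x + y) = chr x * chr y) \<and> chr 1 \<noteq> 1 \<and> chr 0 = 1
         \<and> (\<forall>x::'a. x \<noteq> 0 \<longrightarrow> (\<exists>y. x * y = 1))"
proof -
  define p where "p = CHAR('a)"
  from assms obtain lam f z where inv: "\<forall>x::'a. x \<noteq> 0 \<longrightarrow> (\<exists>y. x * y = 1)"
    and pr: "prime p" and f1: "f \<ge> 1" and cq: "CARD('a) = CHAR('a) ^ f"
    and lq: "lam ^ (CARD('a) - 1) = 1" and ord: "\<forall>j. 0 < j \<and> j < CARD('a) - 1 \<longrightarrow> lam ^ j \<noteq> 1"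
    and zr: "prim_root_unity p z"
    and ch: "\<forall>(c :: nat \<Rightarrow> nat). (\<forall>i<f. c i < p) \<longrightarrow> chr (\<Sum>i<f. of_nat (c i) * lam ^ i) = z ^ (c 0)"
    unfolding Fq_setting_def p_def by blast
  have p1: "p > 1" using pr prime_gt_1_nat by blast
  have zp: "z ^ p = 1" using zr unfolding prim_root_unity_def by blast
  have span: "\<exists>c. x = (\<Sum>i<f. of_nat (c i) * lam ^ i)" for x :: 'a
    using fq_span[of f lam x] pr cq lq ord p_def by blast
  have rep: "chr (\<Sum>i<f. of_nat (c i) * lam ^ i) = z ^ (c 0)" for c
  proof -
    have "(\<Sum>i<f. (of_nat (c i) :: 'a) * lam ^ i) = (\<Sum>i<f. of_nat ((\<lambda>i. c i mod p) i) * lam ^ i)"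
      unfolding p_def by (simp add: of_nat_mod_char)
    moreover have "chr (\<Sum>i<f. of_nat ((\<lambda>i. c i mod p) i) * lam ^ i) = z ^ (c 0 mod p)"
      using ch p1 by simp
    ultimately show ?thesis using pow_mod_eq[OF zp, of "c 0"] by simp
  qed
  have addh: "chr (x + y) = chr x * chr y" for x y
  proof -
    obtain c where c: "x = (\<Sum>i<f. of_nat (c i) * lam ^ i)" using span by blast
    obtain c' where c': "y = (\<Sum>i<f. of_nat (c' i) * lam ^ i)" using span by blast
    have e: "x + y = (\<Sum>i<f. of_nat ((\<lambda>i. c i + c' i) i) * lam ^ i)"
      unfolding c c' by (simp add: sum.distrib distrib_right)
    have "chr (x + y) = z ^ (c 0 + c' 0)" unfolding e by (rule rep)
    thus ?thesis using rep c c' by (simp add: power_add)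
  qed
  have "chr 0 = z ^ 0" using rep[of "\<lambda>_. 0"] by simp
  hence c0: "chr 0 = 1" by simp
  obtain f' where f': "f = Suc f'" using f1 by (cases f) auto
  have "(1::'a) = (\<Sum>i<f. of_nat ((\<lambda>i. if i = 0 then 1 else 0::nat) i) * lam ^ i)"
    unfolding f' by (simp only: sum.lessThan_Suc_shift) simp
  hence "chr 1 = z" using rep[of "\<lambda>i. if i = 0 then 1 else 0"] by simp
  moreover have "z \<noteq> 1" using zr p1 unfolding prim_root_unity_def by (metis power_one_right zero_less_one)
  ultimately show ?thesis using addh c0 inv by simp
qed

lemma Zk_props:
  fixes chr :: "'a::{comm_ring_1,finite} \<Rightarrow> complex"
  assumes "Zk_setting chr"
  shows "(\<forall>x y. chr (x + y) = chr x * chr y) \<and> chr 0 = 1 \<and> (\<forall>x. x \<noteq> 0 \<longrightarrow> chr x \<noteq> 1)"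
proof -
  define p where "p = CHAR('a)"
  from assms obtain z where p2: "p \<ge> 2" and all: "\<forall>x::'a. \<exists>m::nat. x = of_nat m"
    and zr: "prim_root_unity p z" and ch: "\<forall>m::nat. chr (of_nat m) = z ^ m"
    unfolding Zk_setting_def p_def by blast
  have zp: "z ^ p = 1" using zr unfolding prim_root_unity_def by blast
  have addh: "chr (x + y) = chr x * chr y" for x y
  proof -
    obtain m m' where "x = of_nat m" "y = of_nat m'" using all by blast
    thus ?thesis using ch[rule_format, of "m + m'"] ch by (simp add: power_add)
  qed
  have c0: "chr 0 = 1" using ch[rule_format, of 0] by simp
  have nz: "chr x \<noteq> 1" if "x \<noteq> 0" for x
  proof -
    obtain m where m: "x = of_nat m" using all by blast
    hence "\<not> p dvd m" using that unfolding p_def by (simp add: of_nat_eq_0_iff_char_dvd)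
    hence "0 < m mod p" "m mod p < p" using p2 by (auto simp: mod_greater_zero_iff_not_dvd)
    hence "z ^ (m mod p) \<noteq> 1" using zr unfolding prim_root_unity_def by blast
    thus ?thesis using m ch pow_mod_eq[OF zp, of m] by simp
  qed
  show ?thesis using addh c0 nz by blast
qed



definition goodc :: "('a::comm_ring_1 \<Rightarrow> complex) \<Rightarrow> ('a ^ 'n) set \<Rightarrow> bool" where
  "goodc chr C \<longleftrightarrow> 0 \<in> C \<and> (\<forall>u\<in>C. \<forall>v\<in>C. u + v \<in> C) \<and> (\<forall>u\<in>C. - u \<in> C)
     \<and> (\<forall>x y. chr (x + y) = chr x * chr y) \<and> chr 0 = 1
     \<and> (\<forall>b. b \<notin> dual_code C \<longrightarrow> (\<exists>u\<in>C. chr (dotp u b) \<noteq> 1))"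

lemma dotp_smult: "dotp (c *s u) b = c * dotp u b"
  unfolding dotp_def by (simp add: sum_distrib_left mult.assoc)

lemma dotp_add: "dotp (u + u') b = dotp u b + dotp u' b"
  unfolding dotp_def by (simp add: sum.distrib distrib_right)

lemma goodc_Fq:
  fixes chr :: "'a::{comm_ring_1,finite} \<Rightarrow> complex" and C :: "('a ^ 'n) set"
  assumes "Fq_setting chr" "subspace_code C"
  shows "goodc chr C"
proof -
  note P = Fq_props[OF assms(1)]
  have neg: "- u \<in> C" if "u \<in> C" for u
  proof -
    have "(-1) *s u \<in> C" using assms(2) that unfolding subspace_code_def by blast
    moreover have "(-1) *s u = - u" by (simp add: vec_eq_iff)
    ultimately show ?thesis by simp
  qed
  have nd: "\<exists>u\<in>C. chr (dotp u b) \<noteq> 1" if H: "b \<notin> dual_code C" for b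
  proof -
    obtain u where u: "u \<in> C" "dotp u b \<noteq> 0" using H unfolding dual_code_def by blast
    obtain y where y: "dotp u b * y = 1" using P u by blast
    have "y *s u \<in> C" using assms(2) u unfolding subspace_code_def by blast
    moreover have "dotp (y *s u) b = 1" using y by (simp add: dotp_smult mult.commute)
    moreover have "chr 1 \<noteq> 1" using P by blast
    ultimately show ?thesis by (intro bexI[of _ "y *s u"]) simp_all
  qed
  have s: "0 \<in> C" "\<forall>u\<in>C. \<forall>v\<in>C. u + v \<in> C" using assms(2) unfolding subspace_code_def by auto
  have a: "\<forall>x y. chr (x + y) = chr x * chr y" "chr 0 = 1" using P by blast+
  show ?thesis unfolding goodc_def
    by (intro conjI) (use s neg nd a in blast)+
qed

lemma goodc_Zk:
  fixes chr :: "'a::{comm_ring_1,finite} \<Rightarrow> complex" and C :: "('a ^ 'n) set"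
  assumes "Zk_setting chr" "additive_code C"
  shows "goodc chr C"
proof -
  note P = Zk_props[OF assms(1)]
  have nd: "\<exists>u\<in>C. chr (dotp u b) \<noteq> 1" if H: "b \<notin> dual_code C" for b
  proof -
    obtain u where u: "u \<in> C" "dotp u b \<noteq> 0" using H unfolding dual_code_def by blast
    have "\<forall>x. x \<noteq> 0 \<longrightarrow> chr x \<noteq> 1" using P by blast
    thus ?thesis using u by blast
  qed
  have s: "0 \<in> C" "\<forall>u\<in>C. \<forall>v\<in>C. u + v \<in> C" "\<forall>u\<in>C. - u \<in> C" using assms(2) unfolding additive_code_def by auto
  have a: "\<forall>x y. chr (x + y) = chr x * chr y" "chr 0 = 1" using P by blast+
  show ?thesis unfolding goodc_def
    by (intro conjI) (use s nd a in blast)+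
qed



lemma prod_hcount:
  fixes x :: "'a::finite \<times> 'a \<times> 'a \<Rightarrow> 'b::comm_monoid_mult" and u v w :: "'a ^ 'n"
  shows "(\<Prod>a\<in>UNIV. x a ^ hcount a u v w) = (\<Prod>i\<in>UNIV. x (u$i, v$i, w$i))"
proof -
  have "(\<Prod>i\<in>UNIV. x (u$i, v$i, w$i)) =
        (\<Prod>a\<in>UNIV. \<Prod>i\<in>{i. i \<in> UNIV \<and> (u$i, v$i, w$i) = a}. x (u$i, v$i, w$i))"
    by (rule prod.group[symmetric]) auto
  also have "\<dots> = (\<Prod>a\<in>UNIV. x a ^ hcount a u v w)"
    unfolding hcount_def by (intro prod.cong refl) (simp add: prod_constant)
  finally show ?thesis by simp
qed

lemma jac_alt: "jac C D w x = (\<Sum>u\<in>C. \<Sum>v\<in>D. \<Prod>i\<in>UNIV. x (u$i, v$i, w$i))"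
  unfolding jac_def by (simp add: prod_hcount)

lemma expand:
  fixes F :: "'n::finite \<Rightarrow> 'a::finite \<Rightarrow> 'b::comm_semiring_1"
  shows "(\<Prod>i\<in>UNIV. \<Sum>y\<in>UNIV. F i y) = (\<Sum>b::'a^'n\<in>UNIV. \<Prod>i\<in>UNIV. F i (b$i))"
proof -
  have e1: "(\<Prod>i\<in>UNIV. \<Sum>y\<in>UNIV. F i y) = (\<Sum>g\<in>PiE UNIV (\<lambda>_. UNIV). \<Prod>i\<in>UNIV. F i (g i))"
    by (rule prod_sum_PiE) auto
  have e2: "PiE (UNIV::'n set) (\<lambda>_. UNIV :: 'a set) = UNIV" by simp
  have r: "(UNIV :: ('n \<Rightarrow> 'a) set) = range (vec_nth :: 'a^'n \<Rightarrow> _)"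
    by (rule surjI[where f=vec_lambda, symmetric]) (simp add: vec_lambda_inverse)
  have e3: "(\<Sum>g\<in>(UNIV :: ('n \<Rightarrow> 'a) set). \<Prod>i\<in>UNIV. F i (g i)) = (\<Sum>b::'a^'n\<in>UNIV. \<Prod>i\<in>UNIV. F i (b$i))"
    by (subst r, subst sum.reindex) (auto simp: inj_def vec_eq_iff)
  show ?thesis using e1 e2 e3 by simp
qed

lemma chr_sum:
  assumes add: "\<forall>x y. chr (x + y) = chr x * chr y" and c0: "chr 0 = (1::complex)" and "finite A"
  shows "chr (\<Sum>i\<in>A. t i) = (\<Prod>i\<in>A. chr (t i))"
  using assms(3) by (induction A rule: finite_induct) (auto simp: c0 add)

lemma goodcD:
  assumes "goodc chr C"
  shows "0 \<in> C" "\<And>u v. u \<in> C \<Longrightarrow> v \<in> C \<Longrightarrow> u + v \<in> C" "\<And>u. u \<in> C \<Longrightarrow> - u \<in> C"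
    "\<And>x y. chr (x + y) = chr x * chr y" "chr 0 = 1"
    "\<And>b. b \<notin> dual_code C \<Longrightarrow> \<exists>u\<in>C. chr (dotp u b) \<noteq> 1"
  using assms unfolding goodc_def by blast+

lemma charsum:
  fixes chr :: "'a::{comm_ring_1,finite} \<Rightarrow> complex" and C :: "('a ^ 'n) set"
  assumes g: "goodc chr C"
  shows "(\<Sum>u\<in>C. chr (dotp u b)) = (if b \<in> dual_code C then of_nat (card C) else 0)"
proof (cases "b \<in> dual_code C")
  case True
  hence "\<forall>u\<in>C. dotp u b = 0" unfolding dual_code_def by blast
  then show ?thesis using True goodcD(5)[OF g] by simp
next
  case False
  then obtain u0 where u0: "u0 \<in> C" "chr (dotp u0 b) \<noteq> 1" using goodcD(6)[OF g] by blast
  have add: "\<forall>x y. chr (x + y) = chr x * chr y" using goodcD(4)[OF g] by blast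
  have img: "(\<lambda>u. u0 + u) ` C = C"
  proof
    show "(\<lambda>u. u0 + u) ` C \<subseteq> C" using goodcD(2)[OF g] u0 by blast
    show "C \<subseteq> (\<lambda>u. u0 + u) ` C"
    proof
      fix v assume "v \<in> C"
      hence "- u0 + v \<in> C" using goodcD(2,3)[OF g] u0 by blast
      moreover have "v = u0 + (- u0 + v)" by simp
      ultimately show "v \<in> (\<lambda>u. u0 + u) ` C" by blast
    qed
  qed
  have "(\<Sum>u\<in>C. chr (dotp u b)) = (\<Sum>u\<in>(\<lambda>u. u0 + u) ` C. chr (dotp u b))" using img by simp
  also have "\<dots> = (\<Sum>u\<in>C. chr (dotp (u0 + u) b))" by (subst sum.reindex) (auto simp: inj_on_def)
  also have "\<dots> = chr (dotp u0 b) * (\<Sum>u\<in>C. chr (dotp u b))"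
    by (simp add: dotp_add add sum_distrib_left)
  finally have "(1 - chr (dotp u0 b)) * (\<Sum>u\<in>C. chr (dotp u b)) = 0" by (simp add: algebra_simps)
  then show ?thesis using False u0 by simp
qed



lemma L1:
  fixes chr :: "'a::{comm_ring_1,finite} \<Rightarrow> complex" and C D :: "('a ^ 'n) set"
  assumes g: "goodc chr C"
  shows "jac (dual_code C) D w x * of_nat (card C) =
         jac C D w (\<lambda>(a1, a2, a3). \<Sum>b\<in>UNIV. chr (a1 * b) * x (b, a2, a3))"
proof -
  define P where "P b v = (\<Prod>i\<in>UNIV. x (b$i, v$i, w$i))" for b v :: "'a^'n"
  have add: "\<And>x y. chr (x + y) = chr x * chr y" and c0: "chr 0 = 1" using goodcD[OF g] by auto
  have cs: "chr (sum t A) = (\<Prod>i\<in>A. chr (t i))" if "finite A" for A and t :: "'n \<Rightarrow> 'a"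
    using chr_sum[of chr A t] add c0 that by blast
  have inner: "(\<Prod>i\<in>UNIV. \<Sum>b\<in>UNIV. chr (u$i * b) * x (b, v$i, w$i)) =
               (\<Sum>b\<in>UNIV. chr (dotp u b) * P b v)" for u v :: "'a^'n"
  proof -
    have "(\<Prod>i\<in>UNIV. \<Sum>b\<in>UNIV. chr (u$i * b) * x (b, v$i, w$i)) =
          (\<Sum>b\<in>UNIV. \<Prod>i\<in>UNIV. chr (u$i * b$i) * x (b$i, v$i, w$i))"
      by (rule expand)
    also have "\<dots> = (\<Sum>b\<in>UNIV. chr (dotp u b) * P b v)"
      unfolding P_def dotp_def
      by (intro sum.cong refl) (simp add: prod.distrib cs)
    finally show ?thesis .
  qed
  have "jac C D w (\<lambda>(a1, a2, a3). \<Sum>b\<in>UNIV. chr (a1 * b) * x (b, a2, a3)) =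
        (\<Sum>u\<in>C. \<Sum>v\<in>D. \<Sum>b\<in>UNIV. chr (dotp u b) * P b v)"
    unfolding jac_alt by (simp add: inner)
  also have "\<dots> = (\<Sum>v\<in>D. \<Sum>b\<in>UNIV. (\<Sum>u\<in>C. chr (dotp u b)) * P b v)"
    by (subst sum.swap) (simp add: sum_distrib_right sum.swap[of _ C])
  also have "\<dots> = (\<Sum>v\<in>D. \<Sum>b\<in>UNIV. (if b \<in> dual_code C then of_nat (card C) * P b v else 0))"
    by (intro sum.cong refl) (simp add: charsum[OF g])
  also have "\<dots> = (\<Sum>v\<in>D. \<Sum>b\<in>dual_code C. of_nat (card C) * P b v)"
    by (simp add: sum.If_cases)
  also have "\<dots> = jac (dual_code C) D w x * of_nat (card C)"
    unfolding jac_alt P_def by (subst sum.swap) (simp add: sum_distrib_left mult.commute)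
  finally show ?thesis by simp
qed

lemma jac_swap: "jac C D w x = jac D C w (\<lambda>(a1, a2, a3). x (a2, a1, a3))"
  unfolding jac_alt by (subst sum.swap) simp

lemma L2:
  fixes chr :: "'a::{comm_ring_1,finite} \<Rightarrow> complex" and C D :: "('a ^ 'n) set"
  assumes g: "goodc chr D"
  shows "jac C (dual_code D) w x * of_nat (card D) =
         jac C D w (\<lambda>(a1, a2, a3). \<Sum>b\<in>UNIV. chr (a2 * b) * x (a1, b, a3))"
proof -
  have "jac C (dual_code D) w x * of_nat (card D) =
        jac (dual_code D) C w (\<lambda>(a1, a2, a3). x (a2, a1, a3)) * of_nat (card D)"
    by (subst jac_swap) simp
  also have "\<dots> = jac D C w (\<lambda>(a1, a2, a3). \<Sum>b\<in>UNIV. chr (a1 * b) * x (a2, b, a3))"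
    by (subst L1[OF g]) simp
  also have "\<dots> = jac C D w (\<lambda>(a1, a2, a3). \<Sum>b\<in>UNIV. chr (a2 * b) * x (a1, b, a3))"
    by (subst jac_swap) simp
  finally show ?thesis .
qed

theorem corollary3p4:
  fixes chr :: "'a::{comm_ring_1,finite} \<Rightarrow> complex"
    and C D :: "('a ^ 'n) set" and w :: "'a ^ 'n"
  assumes setting: "(Fq_setting chr \<and> subspace_code C \<and> subspace_code D)
                  \<or> (Zk_setting chr \<and> additive_code C \<and> additive_code D)"
  shows "(\<forall>x :: 'a \<times> 'a \<times> 'a \<Rightarrow> complex.
           jac (dual_code C) D w x =
             (1 / of_nat (card C)) *
             jac C D w (\<lambda>(a1, a2, a3). \<Sum>b\<in>UNIV. chr (a1 * b) * x (b, a2, a3))) \<and>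
         (\<forall>x :: 'a \<times> 'a \<times> 'a \<Rightarrow> complex.
           jac (dual_code C) (dual_code D) w x =
             (1 / (of_nat (card C) * of_nat (card D))) *
             jac C D w (\<lambda>(a1, a2, a3). \<Sum>b1\<in>UNIV. \<Sum>b2\<in>UNIV.
                          chr (a1 * b1 + a2 * b2) * x (b1, b2, a3)))"
proof -
  have gC: "goodc chr C" and gD: "goodc chr D"
    using setting goodc_Fq goodc_Zk by blast+
  have cC: "card C > 0" using goodcD(1)[OF gC] by (auto simp: card_gt_0_iff)
  have cD: "card D > 0" using goodcD(1)[OF gD] by (auto simp: card_gt_0_iff)
  have add: "\<And>x y. chr (x + y) = chr x * chr y" using goodcD(4)[OF gC] by auto
  have nzC: "(of_nat (card C) :: complex) \<noteq> 0" and nzD: "(of_nat (card D) :: complex) \<noteq> 0"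
    using cC cD by auto
  have i: "jac (dual_code C) D w x =
             (1 / of_nat (card C)) *
             jac C D w (\<lambda>(a1, a2, a3). \<Sum>b\<in>UNIV. chr (a1 * b) * x (b, a2, a3))"
    for x :: "'a \<times> 'a \<times> 'a \<Rightarrow> complex" and D :: "('a ^ 'n) set"
    using L1[OF gC, of D w x] nzC by (simp add: field_simps)
  have ii: "jac (dual_code C) (dual_code D) w x =
             (1 / (of_nat (card C) * of_nat (card D))) *
             jac C D w (\<lambda>(a1, a2, a3). \<Sum>b1\<in>UNIV. \<Sum>b2\<in>UNIV.
                          chr (a1 * b1 + a2 * b2) * x (b1, b2, a3))"
    for x :: "'a \<times> 'a \<times> 'a \<Rightarrow> complex"
  proof -
    define X1 where "X1 = (\<lambda>(a1, a2, a3). \<Sum>b\<in>UNIV. chr (a1 * b) * x (b, a2, a3))"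
    have fun_eq: "(\<lambda>(a1, a2, a3). \<Sum>b\<in>UNIV. chr (a2 * b) * X1 (a1, b, a3)) =
          (\<lambda>(a1, a2, a3). \<Sum>b1\<in>UNIV. \<Sum>b2\<in>UNIV. chr (a1 * b1 + a2 * b2) * x (b1, b2, a3))"
    proof (intro ext, clarify)
      fix a1 a2 a3 :: 'a
      have "(\<Sum>b\<in>UNIV. chr (a2 * b) * X1 (a1, b, a3)) =
            (\<Sum>b2\<in>UNIV. \<Sum>b1\<in>UNIV. chr (a2 * b2) * (chr (a1 * b1) * x (b1, b2, a3)))"
        unfolding X1_def by (simp add: sum_distrib_left)
      also have "\<dots> = (\<Sum>b1\<in>UNIV. \<Sum>b2\<in>UNIV. chr (a1 * b1 + a2 * b2) * x (b1, b2, a3))"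
        by (subst sum.swap) (simp add: add mult_ac)
      finally show "(\<Sum>b\<in>UNIV. chr (a2 * b) * X1 (a1, b, a3)) =
            (\<Sum>b1\<in>UNIV. \<Sum>b2\<in>UNIV. chr (a1 * b1 + a2 * b2) * x (b1, b2, a3))" .
    qed
    have "jac (dual_code C) (dual_code D) w x * (of_nat (card C) * of_nat (card D)) =
          (jac (dual_code C) (dual_code D) w x * of_nat (card C)) * of_nat (card D)"
      by (simp add: mult_ac)
    also have "\<dots> = jac C (dual_code D) w X1 * of_nat (card D)"
      unfolding X1_def by (subst L1[OF gC]) simp
    also have "\<dots> = jac C D w (\<lambda>(a1, a2, a3). \<Sum>b\<in>UNIV. chr (a2 * b) * X1 (a1, b, a3))"
      by (rule L2[OF gD])
    finally show ?thesis using nzC nzD unfolding fun_eq by (simp add: field_simps)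
  qed
  show ?thesis using i ii by blast
qed

end
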